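(* Let $\mathcal{S}=\{s_1,\dots,s_N\}$ be a finite state space, $\mathcal{A}$ a finite action space, $\gamma\in(0,1)$, and consider the real MDP $\langle\mathcal{S},\mathcal{A},\mathbb{P},R,\gamma\rangle$ and the DT MDP $\langle\mathcal{S},\mathcal{A},\mathbb{P}',R',\gamma\rangle$. Let $R_{\max}=\max_{i,j,a}|R(s_i,a)-R'(s_j,a)|$, let $d_0:\mathcal{S}\times\mathcal{S}\to[0,\frac{R_{\max}}{1-\gamma}]$ be the constant zero function, and for $n\ge1$ define $$d_n(s_i,s_j)=\max_a\Big\{|R(s_i,a)-R'(s_j,a)|+\gamma W_1\big(\mathbb{P}(\cdot|s_i,a),\mathbb{P}'(\cdot|s_j,a);d_{n-1}\big)\Big\}.$$ Then $d_n$ converges uniformly, as $n\to\infty$, to a map $\bar d:\mathcal{S}\times\mathcal{S}\to[0,\frac{R_{\max}}{1-\gamma}]$ which is a fixed point of the recursion, i.e. $\bar d(s_i,s_j)=\max_a\{|R(s_i,a)-R'(s_j,a)|+\gamma W_1(\mathbb{P}(\cdot|s_i,a),\mathbb{P}'(\cdot|s_j,a);\bar d)\}$ for all $i,j$, and for all $n$ and all $i,j$, $$\bar d(s_i,s_j)-d_n(s_i,s_j)\le\frac{\gamma^nR_{\max}}{1-\gamma}.$$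
   Context: $\mathbb{P}(\cdot|s,a),\mathbb{P}'(\cdot|s,a)$ are probability distributions on $\mathcal{S}$; $R,R':\mathcal{S}\times\mathcal{A}\to\mathbb{R}$. For probability distributions $P,Q$ on $\mathcal{S}$ and a cost $d:\mathcal{S}\times\mathcal{S}\to[0,\infty)$ (not required to vanish on the diagonal; first argument a state of the real MDP, second a state of the DT MDP), $W_1(P,Q;d)=\min_{\Lambda}\sum_{i,j}\lambda_{i,j}d(s_i,s_j)$, over nonnegative $N\times N$ matrices $\Lambda=(\lambda_{i,j})$ with row sums $\sum_j\lambda_{i,j}=P(s_i)$ and column sums $\sum_i\lambda_{i,j}=Q(s_j)$. *)

theory Defs
  imports "HOL-Analysis.Analysis"
begin

definition is_distr :: "('s::finite \<Rightarrow> real) \<Rightarrow> bool" where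
  "is_distr p \<longleftrightarrow> (\<forall>s. 0 \<le> p s) \<and> (\<Sum>s\<in>UNIV. p s) = 1"

definition couplings :: "('s::finite \<Rightarrow> real) \<Rightarrow> ('s \<Rightarrow> real) \<Rightarrow> ('s \<Rightarrow> 's \<Rightarrow> real) set" where
  "couplings P Q = {L. (\<forall>i j. 0 \<le> L i j) \<and> (\<forall>i. (\<Sum>j\<in>UNIV. L i j) = P i)
                        \<and> (\<forall>j. (\<Sum>i\<in>UNIV. L i j) = Q j)}"

text \<open>Wasserstein-1 (optimal transport) distance with cost d; the minimum over couplings
  (which is attained, so the infimum equals the minimum).\<close>
definition W1 :: "('s::finite \<Rightarrow> real) \<Rightarrow> ('s \<Rightarrow> real) \<Rightarrow> ('s \<Rightarrow> 's \<Rightarrow> real) \<Rightarrow> real" where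
  "W1 P Q d = Inf ((\<lambda>L. \<Sum>i\<in>UNIV. \<Sum>j\<in>UNIV. L i j * d i j) ` couplings P Q)"

definition bisim_step ::
  "('s::finite \<Rightarrow> 'a::finite \<Rightarrow> 's \<Rightarrow> real) \<Rightarrow> ('s \<Rightarrow> 'a \<Rightarrow> 's \<Rightarrow> real)
   \<Rightarrow> ('s \<Rightarrow> 'a \<Rightarrow> real) \<Rightarrow> ('s \<Rightarrow> 'a \<Rightarrow> real) \<Rightarrow> real
   \<Rightarrow> ('s \<Rightarrow> 's \<Rightarrow> real) \<Rightarrow> ('s \<Rightarrow> 's \<Rightarrow> real)" where
  "bisim_step P P' R R' \<gamma> d = (\<lambda>si sj. Max (range (\<lambda>a. \<bar>R si a - R' sj a\<bar>
        + \<gamma> * W1 (P si a) (P' sj a) d)))"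

primrec bisim_iter ::
  "('s::finite \<Rightarrow> 'a::finite \<Rightarrow> 's \<Rightarrow> real) \<Rightarrow> ('s \<Rightarrow> 'a \<Rightarrow> 's \<Rightarrow> real)
   \<Rightarrow> ('s \<Rightarrow> 'a \<Rightarrow> real) \<Rightarrow> ('s \<Rightarrow> 'a \<Rightarrow> real) \<Rightarrow> real \<Rightarrow> nat \<Rightarrow> ('s \<Rightarrow> 's \<Rightarrow> real)" where
  "bisim_iter P P' R R' \<gamma> 0 = (\<lambda>_ _. 0)"
| "bisim_iter P P' R R' \<gamma> (Suc n) = bisim_step P P' R R' \<gamma> (bisim_iter P P' R R' \<gamma> n)"

definition Rmax :: "('s::finite \<Rightarrow> 'a::finite \<Rightarrow> real) \<Rightarrow> ('s \<Rightarrow> 'a \<Rightarrow> real) \<Rightarrow> real" where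
  "Rmax R R' = Max {\<bar>R si a - R' sj a\<bar> | si sj a. True}"

end

theory Submission
  imports Defs
begin

lemma coupling_total:
  assumes "L \<in> couplings P Q" "is_distr P"
  shows "(\<Sum>i\<in>UNIV. \<Sum>j\<in>UNIV. L i j) = 1"
  using assms unfolding couplings_def is_distr_def by auto

lemma couplings_ne:
  assumes "is_distr P" "is_distr Q"
  shows "(\<lambda>i j. P i * Q j) \<in> couplings P Q"
  using assms unfolding couplings_def is_distr_def
  by (auto simp: sum_distrib_left[symmetric] sum_distrib_right[symmetric])

lemma W1_shift:
  fixes P Q :: "'s::finite \<Rightarrow> real"
  assumes P: "is_distr P" and Q: "is_distr Q" and le: "\<And>i j. d i j \<le> d' i j + c"
  shows "W1 P Q d \<le> W1 P Q d' + c"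
proof -
  define C where "C = couplings P Q"
  define f where "f = (\<lambda>L. \<Sum>i\<in>UNIV. \<Sum>j\<in>UNIV. L i j * d i j)"
  define g where "g = (\<lambda>L. \<Sum>i\<in>UNIV. \<Sum>j\<in>UNIV. L i j * d' i j)"
  have Cne: "C \<noteq> {}" using couplings_ne[OF P Q] C_def by auto
  have fg: "f L \<le> g L + c" if "L \<in> C" for L
  proof -
    have L0: "\<And>i j. 0 \<le> L i j" using that unfolding C_def couplings_def by auto
    have "f L \<le> (\<Sum>i\<in>UNIV. \<Sum>j\<in>UNIV. L i j * (d' i j + c))"
      unfolding f_def by (intro sum_mono mult_left_mono le L0)
    also have "\<dots> = g L + c * (\<Sum>i\<in>UNIV. \<Sum>j\<in>UNIV. L i j)"
      unfolding g_def by (simp add: algebra_simps sum.distrib sum_distrib_left)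
    also have "\<dots> = g L + c" using coupling_total[OF that[unfolded C_def] P] by simp
    finally show ?thesis .
  qed
  define B where "B = (\<Sum>i\<in>UNIV. \<Sum>j\<in>UNIV. \<bar>d i j\<bar>)"
  have dB: "- B \<le> d i j" for i j
  proof -
    have "\<bar>d i j\<bar> \<le> (\<Sum>j\<in>UNIV. \<bar>d i j\<bar>)" by (rule member_le_sum) auto
    also have "\<dots> \<le> B" unfolding B_def
      by (rule member_le_sum[where f="\<lambda>i. \<Sum>j\<in>UNIV. \<bar>d i j\<bar>"]) (auto intro: sum_nonneg)
    finally show ?thesis by linarith
  qed
  have fB: "- B \<le> f L" if "L \<in> C" for L
  proof -
    have L0: "\<And>i j. 0 \<le> L i j" using that unfolding C_def couplings_def by auto
    have "(\<Sum>i\<in>UNIV. \<Sum>j\<in>UNIV. L i j * (- B)) \<le> f L"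
      unfolding f_def by (intro sum_mono mult_left_mono dB L0)
    moreover have "(\<Sum>i\<in>UNIV. \<Sum>j\<in>UNIV. L i j * (- B)) = - B"
      using coupling_total[OF that[unfolded C_def] P]
      by (simp add: sum_negf sum_distrib_right[symmetric])
    ultimately show ?thesis by simp
  qed
  have bdd: "bdd_below (f ` C)" using fB by (auto intro!: bdd_belowI[where m="-B"])
  have "Inf (f ` C) - c \<le> Inf (g ` C)"
  proof (rule cInf_greatest)
    show "g ` C \<noteq> {}" using Cne by auto
  next
    fix x assume "x \<in> g ` C"
    then obtain L where L: "L \<in> C" "x = g L" by auto
    have "Inf (f ` C) \<le> f L" using bdd L by (auto intro: cInf_lower)
    then show "Inf (f ` C) - c \<le> x" using fg[OF L(1)] L by simp
  qed
  then show ?thesis unfolding W1_def C_def[symmetric] f_def[symmetric] g_def[symmetric] by simp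
qed

lemma W1_zero:
  fixes P Q :: "'s::finite \<Rightarrow> real"
  assumes P: "is_distr P" and Q: "is_distr Q"
  shows "W1 P Q (\<lambda>_ _. 0) = 0"
proof -
  have "(\<lambda>L. \<Sum>i\<in>UNIV. \<Sum>j\<in>UNIV. L i j * (0::real)) ` couplings P Q = {0}"
    using couplings_ne[OF P Q] by auto
  then show ?thesis unfolding W1_def by simp
qed

lemma step_shift:
  fixes P P' :: "'s::finite \<Rightarrow> 'a::finite \<Rightarrow> 's \<Rightarrow> real"
  assumes g: "0 \<le> \<gamma>" and P: "\<And>s a. is_distr (P s a)" and P': "\<And>s a. is_distr (P' s a)"
    and le: "\<And>i j. d i j \<le> d' i j + c"
  shows "bisim_step P P' R R' \<gamma> d si sj \<le> bisim_step P P' R R' \<gamma> d' si sj + \<gamma> * c"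
proof -
  let ?f = "\<lambda>a. \<bar>R si a - R' sj a\<bar> + \<gamma> * W1 (P si a) (P' sj a) d"
  let ?g = "\<lambda>a. \<bar>R si a - R' sj a\<bar> + \<gamma> * W1 (P si a) (P' sj a) d'"
  have "?f a \<le> Max (range ?g) + \<gamma> * c" for a
  proof -
    have "W1 (P si a) (P' sj a) d \<le> W1 (P si a) (P' sj a) d' + c"
      by (rule W1_shift[OF P P' le])
    then have "?f a \<le> ?g a + \<gamma> * c" using g
      by (metis add_le_cancel_left distrib_left mult_left_mono add.assoc)
    moreover have "?g a \<le> Max (range ?g)" by (rule Max_ge) auto
    ultimately show ?thesis by linarith
  qed
  then have "Max (range ?f) \<le> Max (range ?g) + \<gamma> * c" by (subst Max_le_iff) auto
  then show ?thesis unfolding bisim_step_def by simp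
qed

lemma Rmax_ge: "\<bar>R si a - R' sj a\<bar> \<le> Rmax (R::'s::finite \<Rightarrow> 'a::finite \<Rightarrow> real) R'"
proof -
  have eq: "{\<bar>R si a - R' sj a\<bar> | si sj a. True} = (\<lambda>(si,sj,a). \<bar>R si a - R' sj a\<bar>) ` UNIV"
  proof (rule set_eqI, rule iffI)
    fix x assume "x \<in> {\<bar>R si a - R' sj a\<bar> | si sj a. True}"
    then obtain si sj a where "x = \<bar>R si a - R' sj a\<bar>" by auto
    then show "x \<in> (\<lambda>(si,sj,a). \<bar>R si a - R' sj a\<bar>) ` UNIV"
      by (intro image_eqI[where x="(si,sj,a)"]) auto
  qed auto
  have "\<bar>R si a - R' sj a\<bar> \<in> (\<lambda>(si,sj,a). \<bar>R si a - R' sj a\<bar>) ` UNIV"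
    by (rule image_eqI[where x="(si,sj,a)"]) auto
  then show ?thesis unfolding Rmax_def eq by (intro Max_ge) auto
qed

lemma step_zero:
  fixes P P' :: "'s::finite \<Rightarrow> 'a::finite \<Rightarrow> 's \<Rightarrow> real"
  assumes P: "\<And>s a. is_distr (P s a)" and P': "\<And>s a. is_distr (P' s a)"
  shows "0 \<le> bisim_step P P' R R' \<gamma> (\<lambda>_ _. 0) si sj \<and> bisim_step P P' R R' \<gamma> (\<lambda>_ _. 0) si sj \<le> Rmax R R'"
proof -
  have e: "bisim_step P P' R R' \<gamma> (\<lambda>_ _. 0) si sj = Max (range (\<lambda>a. \<bar>R si a - R' sj a\<bar>))"
    unfolding bisim_step_def using W1_zero[OF P P'] by simp
  obtain a :: 'a where True by simp
  have "0 \<le> \<bar>R si a - R' sj a\<bar>" by simp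
  also have "\<dots> \<le> Max (range (\<lambda>a. \<bar>R si a - R' sj a\<bar>))" by (rule Max_ge) auto
  finally show ?thesis unfolding e using Rmax_ge by (auto simp: Max_le_iff)
qed

theorem theorem3:
  fixes P P' :: "'s::finite \<Rightarrow> 'a::finite \<Rightarrow> 's \<Rightarrow> real"
    and R R' :: "'s \<Rightarrow> 'a \<Rightarrow> real"
    and \<gamma> :: real
  assumes "0 < \<gamma>" and "\<gamma> < 1"
    and "\<And>s a. is_distr (P s a)"
    and "\<And>s a. is_distr (P' s a)"
  shows "\<exists>dbar :: 's \<Rightarrow> 's \<Rightarrow> real.
           (\<forall>si sj. 0 \<le> dbar si sj \<and> dbar si sj \<le> Rmax R R' / (1 - \<gamma>))
         \<and> (\<forall>e>0. \<exists>M. \<forall>n\<ge>M. \<forall>si sj. \<bar>bisim_iter P P' R R' \<gamma> n si sj - dbar si sj\<bar> < e)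
         \<and> (\<forall>si sj. dbar si sj = bisim_step P P' R R' \<gamma> dbar si sj)
         \<and> (\<forall>n si sj. dbar si sj - bisim_iter P P' R R' \<gamma> n si sj \<le> \<gamma> ^ n * Rmax R R' / (1 - \<gamma>))"
proof -
  note g0 = assms(1) and g1 = assms(2) and P = assms(3) and P' = assms(4)
  define d where "d = bisim_iter P P' R R' \<gamma>"
  define F where "F = bisim_step P P' R R' \<gamma>"
  define K where "K = Rmax R R' / (1 - \<gamma>)"
  have d0: "d 0 = (\<lambda>_ _. 0)" and dS: "\<And>n. d (Suc n) = F (d n)" unfolding d_def F_def by auto
  have Rm0: "0 \<le> Rmax R R'" using Rmax_ge[of R _ _ R'] by (meson abs_ge_zero order_trans)
  have K0: "0 \<le> K" unfolding K_def using Rm0 g1 by simp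
  have Fsh: "\<And>x y c i j. (\<And>i j. x i j \<le> y i j + c) \<Longrightarrow> F x i j \<le> F y i j + \<gamma> * c"
    unfolding F_def by (rule step_shift) (use g0 P P' in auto)
  have SZ: "\<And>i j. 0 \<le> F (\<lambda>_ _. 0) i j \<and> F (\<lambda>_ _. 0) i j \<le> Rmax R R'"
    unfolding F_def by (rule step_zero) (use P P' in auto)
  have mono: "d n i j \<le> d (Suc n) i j" for n i j
  proof (induction n arbitrary: i j)
    case 0 then show ?case using SZ by (simp add: d0 dS)
  next
    case (Suc n)
    have "F (d n) i j \<le> F (d (Suc n)) i j + \<gamma> * 0" by (rule Fsh) (use Suc in simp)
    then show ?case by (simp add: dS)
  qed
  have incr: "d (Suc n) i j \<le> d n i j + \<gamma> ^ n * Rmax R R'" for n i j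
  proof (induction n arbitrary: i j)
    case 0 then show ?case using SZ by (simp add: d0 dS)
  next
    case (Suc n)
    have "F (d (Suc n)) i j \<le> F (d n) i j + \<gamma> * (\<gamma> ^ n * Rmax R R')" by (rule Fsh) (use Suc in simp)
    then show ?case by (simp add: dS)
  qed
  have gap: "d (n + m) i j \<le> d n i j + (\<gamma> ^ n - \<gamma> ^ (n + m)) * K" for n m i j
  proof (induction m)
    case 0 then show ?case by simp
  next
    case (Suc m)
    have eqn: "\<gamma> ^ (n + m) * Rmax R R' = \<gamma> ^ (n + m) * (1 - \<gamma>) * K"
      unfolding K_def using g1 by simp
    have "d (n + Suc m) i j \<le> d (n + m) i j + \<gamma> ^ (n + m) * (1 - \<gamma>) * K"
      using incr[of "n + m" i j] by (metis eqn add_Suc_right)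
    also have "\<dots> \<le> d n i j + (\<gamma> ^ n - \<gamma> ^ (n + m)) * K + \<gamma> ^ (n + m) * (1 - \<gamma>) * K"
      using Suc by simp
    also have "\<dots> = d n i j + (\<gamma> ^ n - \<gamma> ^ (n + Suc m)) * K"
      by (simp add: algebra_simps)
    finally show ?case .
  qed
  have monoD: "d n i j \<le> d (n + m) i j" for n m i j
    by (induction m) (auto intro: order_trans mono)
  have ub: "d m i j \<le> d n i j + \<gamma> ^ n * K" for m n i j
  proof (cases "n \<le> m")
    case True
    then obtain k where m: "m = n + k" using le_Suc_ex by blast
    have "0 \<le> \<gamma> ^ (n + k) * K" using g0 K0 by simp
    then show ?thesis using gap[of n k i j] m by (simp add: algebra_simps)
  next
    case False
    then obtain k where n: "n = m + k" by (metis le_Suc_ex nat_le_linear)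
    have "0 \<le> \<gamma> ^ n * K" using g0 K0 by simp
    then show ?thesis using monoD[where n=m and m=k and i=i and j=j] n by simp
  qed
  define dbar where "dbar = (\<lambda>i j. SUP m. d m i j)"
  have bdd: "bdd_above (range (\<lambda>m. d m i j))" for i j
    using ub[where n=0 and i=i and j=j] by (auto intro!: bdd_aboveI)
  have lo: "d n i j \<le> dbar i j" for n i j
    unfolding dbar_def by (rule cSUP_upper) (use bdd in auto)
  have hi: "dbar i j \<le> d n i j + \<gamma> ^ n * K" for n i j
    unfolding dbar_def by (rule cSUP_least) (use ub in auto)
  have small: "\<exists>M. \<gamma> ^ M * K < e" if "e > 0" for e
  proof -
    have ep: "0 < e / (K + 1)" using that K0 by simp
    obtain M where "\<gamma> ^ M < e / (K + 1)" using real_arch_pow_inv[OF ep g1] by auto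
    then have "\<gamma> ^ M * (K + 1) < e" using K0 by (simp add: field_simps)
    moreover have "\<gamma> ^ M * K \<le> \<gamma> ^ M * (K + 1)" using g0 by simp
    ultimately have "\<gamma> ^ M * K < e" by linarith
    then show ?thesis by blast
  qed
  have zero_gap: "x \<le> y" if "\<And>n. x \<le> y + \<gamma> ^ n * K" for x y :: real
  proof (rule ccontr)
    assume "\<not> x \<le> y"
    then obtain M where "\<gamma> ^ M * K < x - y" using small[of "x - y"] by auto
    then show False using that[of M] by simp
  qed
  have fix1: "dbar i j \<le> F dbar i j" for i j
  proof (rule zero_gap)
    fix n
    have "d (Suc n) i j \<le> F dbar i j + \<gamma> * 0" unfolding dS by (rule Fsh) (use lo in simp)
    moreover have "\<gamma> ^ Suc n * K \<le> \<gamma> ^ n * K" using g0 g1 K0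
      by (simp add: mult_right_mono mult_left_le_one_le)
    ultimately show "dbar i j \<le> F dbar i j + \<gamma> ^ n * K" using hi[of i j "Suc n"] by simp
  qed
  have fix2: "F dbar i j \<le> dbar i j" for i j
  proof (rule zero_gap)
    fix n
    have "F dbar i j \<le> F (d n) i j + \<gamma> * (\<gamma> ^ n * K)" by (rule Fsh) (use hi in simp)
    moreover have "\<gamma> * (\<gamma> ^ n * K) \<le> \<gamma> ^ n * K" using g0 g1 K0
      by (simp add: mult_left_le_one_le)
    ultimately show "F dbar i j \<le> dbar i j + \<gamma> ^ n * K" using lo[of "Suc n" i j] dS by simp
  qed
  show ?thesis
  proof (intro exI[of _ dbar] conjI allI impI)
    fix si sj
    show "0 \<le> dbar si sj" using lo[of 0 si sj] d0 by simp
    show "dbar si sj \<le> Rmax R R' / (1 - \<gamma>)" using hi[of si sj 0] d0 K_def by simp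
    show "dbar si sj = bisim_step P P' R R' \<gamma> dbar si sj"
      using fix1 fix2 F_def by (simp add: order_antisym)
  next
    fix e :: real assume "e > 0"
    then obtain M where M: "\<gamma> ^ M * K < e" using small by auto
    show "\<exists>M. \<forall>n\<ge>M. \<forall>si sj. \<bar>bisim_iter P P' R R' \<gamma> n si sj - dbar si sj\<bar> < e"
    proof (intro exI[of _ M] allI impI)
      fix n si sj assume "M \<le> n"
      then have "\<gamma> ^ n \<le> \<gamma> ^ M" using g0 g1 by (simp add: power_decreasing)
      then have "\<gamma> ^ n * K \<le> \<gamma> ^ M * K" using K0 by (simp add: mult_right_mono)
      then show "\<bar>bisim_iter P P' R R' \<gamma> n si sj - dbar si sj\<bar> < e"
        using lo[of n si sj] hi[of si sj n] M d_def by auto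
    qed
  next
    fix n si sj
    show "dbar si sj - bisim_iter P P' R R' \<gamma> n si sj \<le> \<gamma> ^ n * Rmax R R' / (1 - \<gamma>)"
      using hi[of si sj n] d_def K_def by simp
  qed
qed

end
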